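(* Let $N$ be an even positive integer and $\hbar=1/(2\pi N)$. For every operator $A$ that is a finite linear combination of the operators $U^jV^k$ ($j,k\in\mathbb{Z}$), and every $m\in\{0,\dots,N-1\}$, \[ [X,F^\dagger AF]\,\Phi_m^{(0,0)}=[Y,F^\dagger AF]\,\Phi_m^{(0,0)}=0. \]
   Context: On $L^2(\mathbb{R})$ with $[\widehat{x},\widehat{p}]=i\hbar$, $U=e^{2\pi i\widehat{x}}$, $V=e^{2\pi i\widehat{p}}$. $|x\rangle_x$ are position eigen-distributions and $\Phi_m^{(0,0)}=N^{-1/2}\sum_{k\in\mathbb{Z}}|m/N+k\rangle_x$. $X^s=e^{is\widehat{x}/\hbar}$, $Y^s=e^{is\widehat{p}/\hbar}$ for real $s$ (so $X=U^N$, $Y=V^N$). Projections $L,R,E_x,O_x$ are multiplication in position representation by the indicators of $[0,1/2)+\mathbb{Z}$, $[1/2,1)+\mathbb{Z}$, $[0,1)+2\mathbb{Z}$, $[1,2)+2\mathbb{Z}$; $B,T,E_p,O_p$ are the analogous projections in momentum representation onto $[0,1/2)+\mathbb{Z}$, $[1/2,1)+\mathbb{Z}$, $[0,1)+2\mathbb{Z}$, $[1,2)+2\mathbb{Z}$; all act on $\delta$-comb distributions in the natural way. $S=\exp\!\left(-\frac{i\log2}{2\hbar}(\widehat{x}\widehat{p}+\widehat{p}\widehat{x})\right)$. The propagator is $F=S(L+X^{-1}R)(E_p+Y^{-1/2}O_p)$, which the paper also writes as $(E_x+X^{-1/2}O_x)(B+Y^{-1}T)S$. *)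

theory Defs
  imports Complex_Main
begin

text \<open>
Units: hbar = 1/(2 pi N), N a positive integer.
A delta-comb distribution  sum_x c(x) |x>_x  is represented by its coefficient
function c :: real => complex.  All operators below act on coefficient functions
exactly as the corresponding operators act on such distributions:
  - multiplication by a function f(x_hat):  c |-> (y |-> f y * c y)
  - Y^s = exp(i s p_hat / hbar) is the translation psi(x) |-> psi(x+s); on
    coefficients c |-> (y |-> c (y+s))
  - S psi(x) = 2^(-1/2) psi(x/2); on coefficients c |-> (y |-> sqrt 2 * c (y/2))
  - momentum-space projections (spectral projections of p_hat onto a set Om of
    period 2): for a comb c with integer period P (c(y+P) = c y), its momentum
    representation is supported on the lattice (1/(N P)) Z; there the indicator
    of Om is periodic in the lattice index with period K = 2 N P, hence equals the
    trigonometric polynomial sum_{r<K} g_r exp(2 pi i r p / 2), and multiplication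
    by exp(2 pi i r p/2) = exp(i s p/hbar) with s = r/(2N) is Y^s.
\<close>

type_synonym comb = "real \<Rightarrow> complex"

definition mulop :: "(real \<Rightarrow> complex) \<Rightarrow> comb \<Rightarrow> comb" where
  "mulop f c = (\<lambda>y. f y * c y)"

definition Xs :: "nat \<Rightarrow> real \<Rightarrow> comb \<Rightarrow> comb" where
  "Xs N s c = mulop (\<lambda>y. cis (2 * pi * real N * s * y)) c"

definition Ys :: "real \<Rightarrow> comb \<Rightarrow> comb" where
  "Ys s c = (\<lambda>y. c (y + s))"

definition Uop :: "int \<Rightarrow> comb \<Rightarrow> comb" where
  "Uop j c = mulop (\<lambda>y. cis (2 * pi * real_of_int j * y)) c"

text \<open>V^k = exp(2 pi i k p_hat) = Y^(2 pi hbar k) = Y^(k/N).\<close>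
definition Vop :: "nat \<Rightarrow> int \<Rightarrow> comb \<Rightarrow> comb" where
  "Vop N k c = Ys (real_of_int k / real N) c"

definition Xop :: "nat \<Rightarrow> comb \<Rightarrow> comb" where "Xop N = Xs N 1"
definition Yop :: "comb \<Rightarrow> comb" where "Yop = Ys 1"

definition indop :: "real set \<Rightarrow> comb \<Rightarrow> comb" where
  "indop A c = mulop (\<lambda>y. if y \<in> A then 1 else 0) c"

definition Lset :: "real set" where "Lset = {y. frac y < 1/2}"
definition Rset :: "real set" where "Rset = {y. 1/2 \<le> frac y}"
definition Eset :: "real set" where "Eset = {y. frac (y/2) < 1/2}"
definition Oset :: "real set" where "Oset = {y. 1/2 \<le> frac (y/2)}"

definition Lop :: "comb \<Rightarrow> comb" where "Lop = indop Lset"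
definition Rop :: "comb \<Rightarrow> comb" where "Rop = indop Rset"
definition Exop :: "comb \<Rightarrow> comb" where "Exop = indop Eset"
definition Oxop :: "comb \<Rightarrow> comb" where "Oxop = indop Oset"

definition cadd :: "comb \<Rightarrow> comb \<Rightarrow> comb" where
  "cadd c d = (\<lambda>y. c y + d y)"

definition comb_period :: "comb \<Rightarrow> nat" where
  "comb_period c = (LEAST P. 0 < P \<and> (\<forall>y. c (y + real P) = c y))"

text \<open>Spectral projection of p_hat onto Om (Om assumed 2-periodic), on integer-periodic combs.\<close>
definition momproj :: "nat \<Rightarrow> real set \<Rightarrow> comb \<Rightarrow> comb" where
  "momproj N Om c =
    (let P = comb_period c; K = 2 * N * P;
         g = (\<lambda>r::nat. (1 / of_nat K) *
               (\<Sum>l<K. (if real l / (real N * real P) \<in> Om then 1 else 0)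
                        * cis (- 2 * pi * real r * real l / real K)))
     in (\<lambda>y. \<Sum>r<K. g r * Ys (real r / (2 * real N)) c y))"

definition Bop :: "nat \<Rightarrow> comb \<Rightarrow> comb" where "Bop N = momproj N Lset"
definition Top :: "nat \<Rightarrow> comb \<Rightarrow> comb" where "Top N = momproj N Rset"
definition Epop :: "nat \<Rightarrow> comb \<Rightarrow> comb" where "Epop N = momproj N Eset"
definition Opop :: "nat \<Rightarrow> comb \<Rightarrow> comb" where "Opop N = momproj N Oset"

text \<open>S = exp(-(i log 2/(2 hbar))(xp+px)): psi(x) |-> 2^(-1/2) psi(x/2).\<close>
definition Sop :: "comb \<Rightarrow> comb" where "Sop c = (\<lambda>y. complex_of_real (sqrt 2) * c (y / 2))"
definition Sinv :: "comb \<Rightarrow> comb" where "Sinv c = (\<lambda>y. c (2 * y) / complex_of_real (sqrt 2))"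

definition Fop :: "nat \<Rightarrow> comb \<Rightarrow> comb" where
  "Fop N c = (let d = cadd (Epop N c) (Ys (-1/2) (Opop N c))
              in Sop (cadd (Lop d) (Xs N (-1) (Rop d))))"

definition Fdag :: "nat \<Rightarrow> comb \<Rightarrow> comb" where
  "Fdag N c = (let d = Sinv c; e = cadd (Lop d) (Rop (Xop N d))
               in cadd (Epop N e) (Opop N (Ys (1/2) e)))"

definition Aop :: "nat \<Rightarrow> (int \<times> int \<Rightarrow> complex) \<Rightarrow> comb \<Rightarrow> comb" where
  "Aop N a c = (\<lambda>y. \<Sum>jk\<in>{jk. a jk \<noteq> 0}. a jk * Uop (fst jk) (Vop N (snd jk) c) y)"

definition Phi :: "nat \<Rightarrow> nat \<Rightarrow> comb" where
  "Phi N m = (\<lambda>y. if (\<exists>k::int. y = real m / real N + real_of_int k)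
                   then complex_of_real (1 / sqrt (real N)) else 0)"

definition commutator_on :: "(comb \<Rightarrow> comb) \<Rightarrow> (comb \<Rightarrow> comb) \<Rightarrow> comb \<Rightarrow> comb" where
  "commutator_on P Q v = (\<lambda>y. P (Q v) y - Q (P v) y)"

end

theory Submission
  imports Defs
begin

definition xN :: "nat \<Rightarrow> real \<Rightarrow> complex" where "xN N y = cis (2*pi*real N*y)"
definition per1 :: "comb \<Rightarrow> bool" where "per1 c = (\<forall>y. c (y+1) = c y)"
definition suppN :: "nat \<Rightarrow> comb \<Rightarrow> bool" where "suppN N c = (\<forall>y. xN N y * c y = c y)"
definition supp2 :: "nat \<Rightarrow> comb \<Rightarrow> bool" where "supp2 N c = (\<forall>y. (xN N y)^2 * c y = c y)"
definition xmul :: "nat \<Rightarrow> comb \<Rightarrow> comb" where "xmul N c = (\<lambda>y. xN N y * c y)"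

lemma cis2pi_int [simp]: "cis (2 * (pi * real_of_int k)) = 1"
  using cis_multiple_2pi[of "real_of_int k"] by (simp add: mult.assoc)

lemma cis2pi_nat [simp]: "cis (2 * (pi * real k)) = 1"
  using cis2pi_int[of "int k"] by simp

lemma cis2pi_int2 [simp]: "cis (2 * (pi * (real N * real_of_int k))) = 1"
  using cis2pi_int[of "int N * k"] by (simp add: mult_ac)

lemma cis_pi_nat: "cis (pi * real r) = (-1)^r"
  using DeMoivre[of pi r] by (simp add: mult.commute)

lemma xN_shift: "xN N (y + t) = xN N y * cis (2*pi*real N*t)"
  unfolding xN_def by (simp add: cis_mult distrib_left)

lemma xN_half: "even N \<Longrightarrow> xN N (y + 1/2) = xN N y"
proof -
  assume "even N"
  then obtain k where k: "N = 2*k" by blast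
  have "cis (2*pi*real N*(1/2)) = cis (2*pi*real_of_int (int k))" using k by simp
  also have "\<dots> = 1" by (rule cis_multiple_2pi) simp
  finally show ?thesis by (simp add: xN_shift)
qed

lemma xN_mhalf: "even N \<Longrightarrow> xN N (y - 1/2) = xN N y"
  using xN_half[of N "y - 1/2"] by simp

lemma xN_int: "xN N (y + real_of_int k) = xN N y"
proof -
  have "cis (2*pi*real N*real_of_int k) = 1" using cis2pi_int2[of N k] by (simp add: mult_ac)
  then show ?thesis by (simp add: xN_shift)
qed

lemma xN_one: "xN N (y + 1) = xN N y"
  using xN_int[of N y 1] by simp

lemma xN_kN: "0 < N \<Longrightarrow> xN N (y + real_of_int k / real N) = xN N y"
proof -
  assume "0 < N"
  then have "cis (2*pi*real N*(real_of_int k / real N)) = cis (2*pi*real_of_int k)" by simp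
  also have "\<dots> = 1" by (rule cis_multiple_2pi) simp
  finally show ?thesis by (simp add: xN_shift)
qed

lemma xN_r: "0 < N \<Longrightarrow> xN N (y + real r / (2*real N)) = xN N y * (-1)^r"
proof -
  assume "0 < N"
  then have "cis (2*pi*real N*(real r / (2*real N))) = cis (pi * real r)" by simp
  then show ?thesis by (simp add: xN_shift cis_pi_nat)
qed

lemma xN_sq: "(xN N y)^2 = xN N (2*y)"
  unfolding xN_def DeMoivre by (simp add: mult_ac)

definition gg :: "nat \<Rightarrow> real set \<Rightarrow> nat \<Rightarrow> complex" where
  "gg N Om r = (1 / of_nat (2*N)) *
               (\<Sum>l<2*N. (if real l / real N \<in> Om then 1 else 0)
                        * cis (- 2 * pi * real r * real l / real (2*N)))"

lemma period_per1: "per1 c \<Longrightarrow> comb_period c = 1"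
  unfolding comb_period_def per1_def
  by (rule Least_equality) auto

lemma momproj_per1: "per1 c \<Longrightarrow>
  momproj N Om c = (\<lambda>y. \<Sum>r<2*N. gg N Om r * c (y + real r / (2 * real N)))"
  unfolding momproj_def period_per1 gg_def Ys_def Let_def by simp

lemma Eset_l: "l < 2*N \<Longrightarrow> (real l / real N \<in> Eset) = (l < N)"
proof -
  assume l: "l < 2*N"
  have "real l / real N / 2 = real l / (2 * real N)" by simp
  moreover have "frac (real l / (2 * real N)) = real l / (2 * real N)"
    using l by (subst frac_eq) (auto simp: field_simps)
  ultimately show ?thesis using l unfolding Eset_def by (auto simp: field_simps)
qed

lemma Oset_notE: "(y \<in> Oset) = (y \<notin> Eset)"
  unfolding Oset_def Eset_def by auto

lemma sum_split2: fixes F :: "nat \<Rightarrow> 'a::comm_monoid_add" shows "(\<Sum>l<2*N. F l) = (\<Sum>l<N. F l) + (\<Sum>l<N. F (l+N))"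
proof -
  have "(\<Sum>l<2*N. F l) = sum F {0..<N} + sum F {N..<2*N}"
    using sum.atLeastLessThan_concat[of 0 N "2*N" F] by (simp add: lessThan_atLeast0)
  also have "sum F {N..<2*N} = sum F {0+N..<N+N}" by (simp add: mult_2)
  also have "\<dots> = (\<Sum>l<N. F (l+N))" unfolding sum.shift_bounds_nat_ivl by (simp add: lessThan_atLeast0)
  finally show ?thesis by (simp add: lessThan_atLeast0)
qed

lemma gO_gE: "0 < N \<Longrightarrow> gg N Oset r = (-1)^r * gg N Eset r"
proof -
  assume N: "0 < N"
  define phi where "phi l = cis (- 2 * pi * real r * real l / real (2*N))" for l
  have ph: "phi (l + N) = (-1)^r * phi l" for l
  proof -
    have "- 2 * pi * real r * real (l+N) / real (2*N) = - 2 * pi * real r * real l / real (2*N) + (- (pi * real r))"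
      using N by (simp add: field_simps)
    then have "phi (l+N) = phi l * cis (- (pi * real r))" unfolding phi_def by (simp add: cis_mult)
    also have "cis (- (pi * real r)) = (-1)^r"
      proof -
      have "cis (- (pi * real r)) = inverse (cis (pi * real r))" by (simp add: cis_inverse)
      also have "\<dots> = (-1)^r" by (simp add: cis_pi_nat power_inverse[symmetric])
      finally show ?thesis .
    qed
    finally show ?thesis by simp
  qed
  have E: "gg N Eset r = (1 / of_nat (2*N)) * (\<Sum>l<N. phi l)"
  proof -
    have "gg N Eset r = (1 / of_nat (2*N)) * (\<Sum>l<2*N. (if l < N then 1 else 0) * phi l)"
      unfolding gg_def phi_def by (intro arg_cong2[where f="(*)"] refl sum.cong) (auto simp: Eset_l)
    also have "\<dots> = (1 / of_nat (2*N)) * (\<Sum>l<N. phi l)" by (simp add: sum_split2)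
    finally show ?thesis .
  qed
  have O: "gg N Oset r = (1 / of_nat (2*N)) * (\<Sum>l<N. phi (l+N))"
  proof -
    have "gg N Oset r = (1 / of_nat (2*N)) * (\<Sum>l<2*N. (if l < N then 0 else 1) * phi l)"
      unfolding gg_def phi_def by (intro arg_cong2[where f="(*)"] refl sum.cong) (auto simp: Eset_l Oset_notE)
    also have "\<dots> = (1 / of_nat (2*N)) * (\<Sum>l<N. phi (l+N))" by (simp add: sum_split2)
    finally show ?thesis .
  qed
  show ?thesis unfolding E O ph by (simp add: sum_distrib_left[symmetric])
qed

lemma per1_mom: assumes "per1 c" shows "per1 (momproj N Om c)"
  unfolding momproj_per1[OF assms] per1_def
proof (intro allI sum.cong refl arg_cong2[where f="(*)"])
  fix y :: real and t :: nat
  show "c (y + 1 + real t / (2 * real N)) = c (y + real t / (2 * real N))"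
    using assms[unfolded per1_def, rule_format, of "y + real t / (2 * real N)"] by (simp add: ac_simps)
qed

lemma per1_xmul: "per1 c \<Longrightarrow> per1 (xmul N c)"
  unfolding per1_def xmul_def by (simp add: xN_one)

lemma per1_Ys: "per1 c \<Longrightarrow> per1 (Ys t c)"
  unfolding per1_def Ys_def by (metis add.commute add.left_commute)

lemma per1_cadd: "per1 c \<Longrightarrow> per1 d \<Longrightarrow> per1 (cadd c d)"
  unfolding per1_def cadd_def by simp

lemma supp2_cadd: assumes "supp2 N c" "supp2 N d" shows "supp2 N (cadd c d)"
  unfolding supp2_def cadd_def
proof
  fix y show "(xN N y)^2 * (c y + d y) = c y + d y"
    using assms unfolding supp2_def by (metis distrib_left)
qed

lemma m1sq: "((-1::complex)^r)^2 = 1"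
  by (induct r) (auto simp: power2_eq_square)

lemma supp2_xmul: "supp2 N c \<Longrightarrow> supp2 N (xmul N c)"
  unfolding supp2_def xmul_def by (metis mult.left_commute)

lemma supp2_mom: "0 < N \<Longrightarrow> per1 c \<Longrightarrow> supp2 N c \<Longrightarrow> supp2 N (momproj N Om c)"
proof -
  assume N: "0 < N" and p: "per1 c" and s: "supp2 N c"
  have h: "(xN N y)^2 * (gg N Om r * c (y + real r / (2 * real N))) = gg N Om r * c (y + real r / (2 * real N))" for y r
  proof -
    have "(xN N y)^2 = (xN N (y + real r / (2 * real N)))^2"
      using N by (simp add: xN_r power_mult_distrib m1sq)
    then show ?thesis using s unfolding supp2_def by (metis mult.left_commute)
  qed
  show ?thesis unfolding supp2_def momproj_per1[OF p] sum_distrib_left h by simp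
qed

lemma supp2_half: "supp2 N c \<Longrightarrow> supp2 N (Ys (1/2) c)"
  unfolding supp2_def Ys_def
proof
  fix y assume s: "\<forall>y. (xN N y)^2 * c y = c y"
  have "(xN N y)^2 = (xN N (y + 1/2))^2" unfolding xN_sq
    using xN_int[of N "2*y" 1] by (simp add: distrib_left)
  then show "(xN N y)^2 * c (y + 1/2) = c (y + 1/2)" using s by metis
qed

lemma supp2_mhalf: "supp2 N c \<Longrightarrow> supp2 N (Ys (-1/2) c)"
  unfolding supp2_def Ys_def
proof
  fix y assume s: "\<forall>y. (xN N y)^2 * c y = c y"
  have "(xN N y)^2 = (xN N (y + -1/2))^2" unfolding xN_sq
    using xN_int[of N "2*y + -1" 1] by (simp add: distrib_left)
  then show "(xN N y)^2 * c (y + -1/2) = c (y + -1/2)" using s by metis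
qed

lemma E_xmul: "0 < N \<Longrightarrow> per1 f \<Longrightarrow> momproj N Eset (xmul N f) y = xN N y * momproj N Oset f y"
proof -
  assume N: "0 < N" and p: "per1 f"
  have "gg N Eset r * xmul N f (y + real r / (2 * real N)) = xN N y * (gg N Oset r * f (y + real r / (2 * real N)))" for r
    unfolding xmul_def gO_gE[OF N] xN_r[OF N] by simp
  then show ?thesis unfolding momproj_per1[OF p] momproj_per1[OF per1_xmul[OF p]]
    by (simp add: sum_distrib_left)
qed

lemma O_xmul: "0 < N \<Longrightarrow> per1 f \<Longrightarrow> momproj N Oset (xmul N f) y = xN N y * momproj N Eset f y"
proof -
  assume N: "0 < N" and p: "per1 f"
  have "gg N Oset r * xmul N f (y + real r / (2 * real N)) = xN N y * (gg N Eset r * f (y + real r / (2 * real N)))" for r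
  proof -
    have "((-1::complex)^r) * (-1)^r = 1" by (simp add: power_mult_distrib[symmetric])
    then show ?thesis unfolding xmul_def gO_gE[OF N] xN_r[OF N] by (simp add: mult_ac)
  qed
  then show ?thesis unfolding momproj_per1[OF p] momproj_per1[OF per1_xmul[OF p]]
    by (simp add: sum_distrib_left)
qed

lemma frac_half: "frac (1/2::real) = 1/2" by (simp add: frac_eq)

lemma frac_lo: "frac (z::real) < 1/2 \<Longrightarrow> frac (z + 1/2) = frac z + 1/2"
  by (subst frac_add) (simp add: frac_half)

lemma frac_hi: "1/2 \<le> frac (z::real) \<Longrightarrow> frac (z + 1/2) = frac z - 1/2"
  using frac_lt_1[of z] by (subst frac_add) (simp add: frac_half)

lemma suppN_supp2: "suppN N c \<Longrightarrow> supp2 N c"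
  unfolding suppN_def supp2_def power2_eq_square by (metis mult.assoc)

lemma suppN_xmul: "suppN N c \<Longrightarrow> xmul N c = c"
  unfolding suppN_def xmul_def by auto

lemma xN_inv: "cis (2 * pi * real N * - 1 * z) * xN N z = 1"
  unfolding xN_def by (simp add: cis_mult)

lemma Fop_W:
  assumes N: "0 < N" "even N" and p: "per1 c" and s: "suppN N c"
  shows "per1 (Fop N c) \<and> suppN N (Fop N c)"
proof -
  define d where "d = cadd (momproj N Eset c) (Ys (-1/2) (momproj N Oset c))"
  define f where "f = cadd (Lop d) (Xs N (-1) (Rop d))"
  have Fd: "Fop N c = Sop f" unfolding Fop_def d_def f_def Epop_def Opop_def Let_def by simp
  have pd: "per1 d" unfolding d_def by (intro per1_cadd per1_Ys per1_mom p)
  have s2c: "supp2 N c" using s by (rule suppN_supp2)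
  have sd: "supp2 N d" unfolding d_def
    by (intro supp2_cadd supp2_mom supp2_mhalf N p s2c per1_mom)
  have xc: "xmul N c = c" using s by (rule suppN_xmul)
  have D3: "d (y + 1/2) = xN N y * d y" for y
  proof -
    have a: "d (y + 1/2) = momproj N Eset c (y + 1/2) + momproj N Oset c y"
      unfolding d_def cadd_def Ys_def by simp
    have b: "d y = momproj N Eset c y + momproj N Oset c (y + -1/2)"
      unfolding d_def cadd_def Ys_def by simp
    have c1: "xN N y * momproj N Eset c y = momproj N Oset c y"
      using O_xmul[OF N(1) p, of y] xc by simp
    have c2: "xN N y * momproj N Oset c (y + -1/2) = momproj N Eset c (y + 1/2)"
    proof -
      have "xN N y = xN N (y + -1/2)" using xN_mhalf[OF N(2), of y] by simp
      then have "xN N y * momproj N Oset c (y + -1/2) = momproj N Eset (xmul N c) (y + -1/2)"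
        using E_xmul[OF N(1) p, of "y + -1/2"] by simp
      also have "\<dots> = momproj N Eset c (y + -1/2 + 1)"
        using per1_mom[OF p, of N Eset] unfolding per1_def xc by metis
      finally show ?thesis by (simp add: add.commute)
    qed
    show ?thesis unfolding a b distrib_left c1 c2 by simp
  qed
  have fz: "f z = (if frac z < 1/2 then d z else cis (2 * pi * real N * - 1 * z) * d z)" for z
    unfolding f_def cadd_def Lop_def Rop_def indop_def mulop_def Xs_def Lset_def Rset_def by auto
  have fhalf: "f (z + 1/2) = f z" for z
  proof (cases "frac z < 1/2")
    case True
    then have "\<not> frac (z + 1/2) < 1/2" using frac_lo[of z] frac_ge_0[of z] True by linarith
    then have "f (z + 1/2) = cis (2 * pi * real N * - 1 * (z + 1/2)) * (xN N z * d z)"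
      unfolding fz D3 by simp
    also have "\<dots> = (cis (2 * pi * real N * - 1 * (z + 1/2)) * xN N (z + 1/2)) * d z"
      using xN_half[OF N(2), of z] by simp
    also have "\<dots> = d z" unfolding xN_inv by simp
    finally show ?thesis unfolding fz[of z] using True by simp
  next
    case False
    then have "frac (z + 1/2) < 1/2" using frac_hi[of z] frac_lt_1[of z] False by linarith
    then have "f (z + 1/2) = xN N z * d z" unfolding fz D3 by simp
    also have "\<dots> = cis (2 * pi * real N * - 1 * z) * d z"
    proof -
      have "cis (2 * pi * real N * - 1 * z) * ((xN N z)^2 * d z) = xN N z * d z"
        using xN_inv[of N z] by (simp add: power2_eq_square)
      then show ?thesis using sd unfolding supp2_def by metis
    qed
    finally show ?thesis unfolding fz[of z] using False by simp
  qed
  have sf: "(xN N z)^2 * f z = f z" for z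
    using sd unfolding fz supp2_def by (simp add: mult.left_commute)
  have "per1 (Sop f)" unfolding per1_def Sop_def
  proof
    fix y :: real
    have "(y + 1) / 2 = y/2 + 1/2" by simp
    then show "complex_of_real (sqrt 2) * f ((y + 1) / 2) = complex_of_real (sqrt 2) * f (y / 2)"
      using fhalf[of "y/2"] by (simp only:)
  qed
  moreover have "suppN N (Sop f)" unfolding suppN_def Sop_def
  proof
    fix y :: real
    have "xN N y = (xN N (y/2))^2" unfolding xN_sq by simp
    then show "xN N y * (complex_of_real (sqrt 2) * f (y / 2)) = complex_of_real (sqrt 2) * f (y / 2)"
      using sf[of "y/2"] by (simp add: mult.left_commute)
  qed
  ultimately show ?thesis unfolding Fd by simp
qed

lemma Xop_xmul: "Xop N = xmul N"
  unfolding Xop_def Xs_def xmul_def mulop_def xN_def by (intro ext) simp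

lemma Fdag_W:
  assumes N: "0 < N" "even N" and p: "per1 h" and s: "suppN N h"
  shows "per1 (Fdag N h) \<and> suppN N (Fdag N h)"
proof -
  define sv where "sv = Sinv h"
  define e where "e = cadd (Lop sv) (Rop (xmul N sv))"
  have Fd: "Fdag N h = cadd (momproj N Eset e) (momproj N Oset (Ys (1/2) e))"
    unfolding Fdag_def e_def sv_def Epop_def Opop_def Let_def Xop_xmul by simp
  have hp: "h (z + 1) = h z" for z using p unfolding per1_def by blast
  have svz: "sv z = h (2*z) / complex_of_real (sqrt 2)" for z unfolding sv_def Sinv_def by simp
  have shalf: "sv (z + 1/2) = sv z" for z unfolding svz using hp[of "2*z"] by (simp add: distrib_left)
  have ps: "sv (z + 1) = sv z" for z using shalf[of z] shalf[of "z + 1/2"] by (simp add: add.commute)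
  have s2: "(xN N z)^2 * sv z = sv z" for z
    unfolding svz xN_sq using s unfolding suppN_def by (metis times_divide_eq_right)
  have ez: "e z = (if frac z < 1/2 then sv z else xN N z * sv z)" for z
    unfolding e_def cadd_def Lop_def Rop_def indop_def mulop_def xmul_def Lset_def Rset_def by auto
  have pe: "per1 e" unfolding per1_def
  proof
    fix y :: real
    have "frac (y + 1) = frac y" using frac_add_of_int_right[of y 1] by simp
    then show "e (y + 1) = e y" unfolding ez ps xN_one by simp
  qed
  have se: "supp2 N e" unfolding supp2_def
  proof
    fix z show "(xN N z)^2 * e z = e z" unfolding ez using s2[of z] by (simp add: mult.left_commute)
  qed
  have E1: "Ys (1/2) e = xmul N e"
  proof (rule ext)
    fix z
    show "Ys (1/2) e z = xmul N e z"
    proof (cases "frac z < 1/2")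
      case True
      then have "\<not> frac (z + 1/2) < 1/2" using frac_lo[of z] frac_ge_0[of z] True by linarith
      then show ?thesis unfolding Ys_def xmul_def ez using True xN_half[OF N(2), of z] shalf[of z] by simp
    next
      case False
      then have "frac (z + 1/2) < 1/2" using frac_hi[of z] frac_lt_1[of z] False by linarith
      then have "Ys (1/2) e z = sv z" unfolding Ys_def ez shalf by simp
      also have "\<dots> = xN N z * (xN N z * sv z)" using s2[of z] by (simp add: power2_eq_square mult.assoc)
      finally show ?thesis unfolding xmul_def ez using False by simp
    qed
  qed
  have pEe: "per1 (momproj N Eset e)" by (rule per1_mom[OF pe])
  have sEe: "supp2 N (momproj N Eset e)" by (rule supp2_mom[OF N(1) pe se])
  have Fd2: "Fdag N h = (\<lambda>y. momproj N Eset e y + xN N y * momproj N Eset e y)"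
    unfolding Fd E1 cadd_def O_xmul[OF N(1) pe] ..
  have "per1 (Fdag N h)" unfolding Fd2 per1_def using pEe unfolding per1_def by (simp add: xN_one)
  moreover have "suppN N (Fdag N h)" unfolding Fd2 suppN_def
  proof
    fix y
    show "xN N y * (momproj N Eset e y + xN N y * momproj N Eset e y) = momproj N Eset e y + xN N y * momproj N Eset e y"
      using sEe unfolding supp2_def power2_eq_square by (metis add.commute distrib_left mult.assoc)
  qed
  ultimately show ?thesis ..
qed

lemma cis_j_shift: "cis (2 * pi * real_of_int j * (y + 1)) = cis (2 * pi * real_of_int j * y)"
proof -
  have "cis (2 * pi * real_of_int j * (y + 1)) = cis (2 * pi * real_of_int j * y + 2 * pi * real_of_int j)"
    by (simp add: distrib_left)
  also have "\<dots> = cis (2 * pi * real_of_int j * y) * cis (2 * pi * real_of_int j)"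
    by (rule cis_mult[symmetric])
  moreover have c1: "cis (2 * pi * real_of_int j) = 1" by (metis cis2pi_int mult.assoc)
  ultimately show ?thesis by (metis mult_1_right)
qed

lemma Aop_W:
  assumes N: "0 < N" and p: "per1 h" and s: "suppN N h"
  shows "per1 (Aop N a h) \<and> suppN N (Aop N a h)"
proof -
  have trm: "Uop j (Vop N k h) y = cis (2 * pi * real_of_int j * y) * h (y + real_of_int k / real N)" for j k y
    unfolding Uop_def Vop_def Ys_def mulop_def ..
  have hp: "h (z + 1) = h z" for z using p unfolding per1_def by blast
  have "per1 (Aop N a h)" unfolding per1_def Aop_def trm
  proof (intro allI sum.cong refl)
    fix y :: real and jk :: "int \<times> int"
    have "h (y + 1 + real_of_int (snd jk) / real N) = h (y + real_of_int (snd jk) / real N)"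
      using hp[of "y + real_of_int (snd jk) / real N"] by (simp add: ac_simps)
    then show "a jk * (cis (2 * pi * real_of_int (fst jk) * (y + 1)) * h (y + 1 + real_of_int (snd jk) / real N)) =
          a jk * (cis (2 * pi * real_of_int (fst jk) * y) * h (y + real_of_int (snd jk) / real N))"
      unfolding cis_j_shift by simp
  qed
  moreover have "suppN N (Aop N a h)" unfolding suppN_def Aop_def trm sum_distrib_left
  proof (intro allI sum.cong refl)
    fix y :: real and jk :: "int \<times> int"
    have "xN N y * h (y + real_of_int (snd jk) / real N) = h (y + real_of_int (snd jk) / real N)"
      using s xN_kN[OF N, of y "snd jk"] unfolding suppN_def by metis
    then show "xN N y * (a jk * (cis (2 * pi * real_of_int (fst jk) * y) * h (y + real_of_int (snd jk) / real N))) =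
         a jk * (cis (2 * pi * real_of_int (fst jk) * y) * h (y + real_of_int (snd jk) / real N))"
      by (metis mult.left_commute)
  qed
  ultimately show ?thesis ..
qed

lemma Phi_W:
  assumes N: "0 < N"
  shows "per1 (Phi N m) \<and> suppN N (Phi N m)"
proof -
  have ex: "(\<exists>k::int. y + 1 = real m / real N + real_of_int k) = (\<exists>k::int. y = real m / real N + real_of_int k)" for y
  proof
    assume "\<exists>k::int. y + 1 = real m / real N + real_of_int k"
    then obtain k :: int where "y + 1 = real m / real N + real_of_int k" by blast
    then have "y = real m / real N + real_of_int (k - 1)" by simp
    then show "\<exists>k::int. y = real m / real N + real_of_int k" by blast
  next
    assume "\<exists>k::int. y = real m / real N + real_of_int k"
    then obtain k :: int where "y = real m / real N + real_of_int k" by blast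
    then have "y + 1 = real m / real N + real_of_int (k + 1)" by simp
    then show "\<exists>k::int. y + 1 = real m / real N + real_of_int k" by blast
  qed
  have "per1 (Phi N m)" unfolding per1_def Phi_def ex by simp
  moreover have "suppN N (Phi N m)" unfolding suppN_def Phi_def
  proof
    fix y
    show "xN N y * (if \<exists>k::int. y = real m / real N + real_of_int k then complex_of_real (1 / sqrt (real N)) else 0) =
      (if \<exists>k::int. y = real m / real N + real_of_int k then complex_of_real (1 / sqrt (real N)) else 0)"
    proof (cases "\<exists>k::int. y = real m / real N + real_of_int k")
      case True
      then obtain k :: int where k: "y = real m / real N + real_of_int k" by blast
      have e2: "2*pi*real N*y = 2 * pi * real_of_int (int m + int N * k)"
        unfolding k using N by (simp add: field_simps)
      have "xN N y = cis (2 * pi * real_of_int (int m + int N * k))"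
        unfolding xN_def e2 ..
      also have "\<dots> = 1" by (rule cis_multiple_2pi) simp
      finally show ?thesis by simp
    qed simp
  qed
  ultimately show ?thesis ..
qed

theorem mainTheorem5:
  fixes N m :: nat and a :: "int \<times> int \<Rightarrow> complex"
  assumes "0 < N" and "even N"
    and "finite {jk. a jk \<noteq> 0}"
    and "m < N"
  shows "commutator_on (Xop N) (\<lambda>v. Fdag N (Aop N a (Fop N v))) (Phi N m) = (\<lambda>y. 0)
       \<and> commutator_on Yop (\<lambda>v. Fdag N (Aop N a (Fop N v))) (Phi N m) = (\<lambda>y. 0)"
proof -
  define G where "G = Fdag N (Aop N a (Fop N (Phi N m)))"
  have P: "per1 (Phi N m)" "suppN N (Phi N m)" using Phi_W[OF assms(1)] by auto
  have F: "per1 (Fop N (Phi N m))" "suppN N (Fop N (Phi N m))" using Fop_W[OF assms(1,2) P] by auto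
  have A: "per1 (Aop N a (Fop N (Phi N m)))" "suppN N (Aop N a (Fop N (Phi N m)))"
    using Aop_W[OF assms(1) F] by auto
  have GW: "per1 G" "suppN N G" unfolding G_def using Fdag_W[OF assms(1,2) A] by auto
  have X: "Xop N (Phi N m) = Phi N m" unfolding Xop_xmul by (rule suppN_xmul[OF P(2)])
  have Y: "Yop (Phi N m) = Phi N m" unfolding Yop_def Ys_def using P(1) unfolding per1_def by simp
  show ?thesis
    unfolding commutator_on_def X Y
    unfolding G_def[symmetric] Xop_xmul xmul_def Yop_def Ys_def
  proof (intro conjI ext)
    fix y
    show "xN N y * G y - G y = 0" using GW(2) unfolding suppN_def by simp
    show "G (y + 1) - G y = 0" using GW(1) unfolding per1_def by simp
  qed
qed

end
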